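(* Let $G$ be a clique tree with blocks $B_1,\dots,B_b$, each block having at least $3$ vertices. Then $$Z(G)=\sum_{i=1}^{b} Z(B_i)-\sum_{v\in V(G)}\bigl(bi_G(v)-1\bigr).$$
   Context: A block of a connected graph is a maximal connected subgraph without a cut vertex of its own; a clique tree is a connected graph each of whose blocks is a complete graph. For a vertex $v$, the block index $bi_G(v)$ is the number of blocks of $G$ containing $v$. $Z(\cdot)$ denotes the zero forcing number: with each vertex coloured blue or white, the colour-change rule makes the unique white neighbour of a blue vertex blue (if it has exactly one white neighbour); $Z(G)$ is the minimum size of an initially blue set from which repeated application of the rule turns all vertices blue. For a complete graph, $Z(K_m)=m-1$. *)

theory Defs
  imports Main
begin

definition simple_graph :: "'a set \<Rightarrow> ('a \<Rightarrow> 'a \<Rightarrow> bool) \<Rightarrow> bool" where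
  "simple_graph V E \<longleftrightarrow> finite V \<and> (\<forall>u v. E u v \<longrightarrow> E v u) \<and> (\<forall>v. \<not> E v v)
     \<and> (\<forall>u v. E u v \<longrightarrow> u \<in> V \<and> v \<in> V)"

definition induced :: "('a \<Rightarrow> 'a \<Rightarrow> bool) \<Rightarrow> 'a set \<Rightarrow> 'a \<Rightarrow> 'a \<Rightarrow> bool" where
  "induced E S = (\<lambda>u v. E u v \<and> u \<in> S \<and> v \<in> S)"

text \<open>The subgraph induced on S is connected (the empty vertex set counts as connected).\<close>
definition connected_on :: "('a \<Rightarrow> 'a \<Rightarrow> bool) \<Rightarrow> 'a set \<Rightarrow> bool" where
  "connected_on E S \<longleftrightarrow> (\<forall>u\<in>S. \<forall>v\<in>S. (induced E S)\<^sup>*\<^sup>* u v)"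

definition nonseparable :: "('a \<Rightarrow> 'a \<Rightarrow> bool) \<Rightarrow> 'a set \<Rightarrow> bool" where
  "nonseparable E S \<longleftrightarrow> S \<noteq> {} \<and> connected_on E S \<and> (\<forall>v\<in>S. connected_on E (S - {v}))"

definition is_block :: "'a set \<Rightarrow> ('a \<Rightarrow> 'a \<Rightarrow> bool) \<Rightarrow> 'a set \<Rightarrow> bool" where
  "is_block V E S \<longleftrightarrow> S \<subseteq> V \<and> nonseparable E S
     \<and> (\<forall>T. S \<subset> T \<and> T \<subseteq> V \<longrightarrow> \<not> nonseparable E T)"

definition blocks :: "'a set \<Rightarrow> ('a \<Rightarrow> 'a \<Rightarrow> bool) \<Rightarrow> 'a set set" where
  "blocks V E = {S. is_block V E S}"

definition block_index :: "'a set \<Rightarrow> ('a \<Rightarrow> 'a \<Rightarrow> bool) \<Rightarrow> 'a \<Rightarrow> nat" where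
  "block_index V E v = card {B \<in> blocks V E. v \<in> B}"

definition is_clique :: "('a \<Rightarrow> 'a \<Rightarrow> bool) \<Rightarrow> 'a set \<Rightarrow> bool" where
  "is_clique E S \<longleftrightarrow> (\<forall>u\<in>S. \<forall>v\<in>S. u \<noteq> v \<longrightarrow> E u v)"

definition clique_tree :: "'a set \<Rightarrow> ('a \<Rightarrow> 'a \<Rightarrow> bool) \<Rightarrow> bool" where
  "clique_tree V E \<longleftrightarrow> V \<noteq> {} \<and> connected_on E V \<and> (\<forall>B\<in>blocks V E. is_clique E B)"

inductive_set forced :: "'a set \<Rightarrow> ('a \<Rightarrow> 'a \<Rightarrow> bool) \<Rightarrow> 'a set \<Rightarrow> 'a set"
  for V E B0 where
  init: "v \<in> B0 \<Longrightarrow> v \<in> forced V E B0"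
| force: "u \<in> forced V E B0 \<Longrightarrow> v \<in> V \<Longrightarrow> E u v \<Longrightarrow>
          (\<forall>w. E u w \<and> w \<noteq> v \<longrightarrow> w \<in> forced V E B0) \<Longrightarrow> v \<in> forced V E B0"

definition zero_forcing_set :: "'a set \<Rightarrow> ('a \<Rightarrow> 'a \<Rightarrow> bool) \<Rightarrow> 'a set \<Rightarrow> bool" where
  "zero_forcing_set V E B0 \<longleftrightarrow> B0 \<subseteq> V \<and> forced V E B0 = V"

definition Z :: "'a set \<Rightarrow> ('a \<Rightarrow> 'a \<Rightarrow> bool) \<Rightarrow> nat" where
  "Z V E = Min (card ` {B0. zero_forcing_set V E B0})"

end

theory Submission
  imports Defs
begin

lemma max_card_ex:
  assumes "finite SS" "S0 \<in> SS"
  shows "\<exists>S\<in>SS. \<forall>T\<in>SS. card T \<le> card S"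
proof -
  have "Max (card ` SS) \<in> card ` SS" using assms by (intro Max_in) auto
  then obtain S where "S \<in> SS" "card S = Max (card ` SS)" by auto
  moreover have "\<forall>T\<in>SS. card T \<le> Max (card ` SS)" using assms by auto
  ultimately show ?thesis by metis
qed

lemma induced_mono_rtc:
  "(induced E S)\<^sup>*\<^sup>* u v \<Longrightarrow> S \<subseteq> T \<Longrightarrow> (induced E T)\<^sup>*\<^sup>* u v"
proof (induction rule: rtranclp_induct)
  case base then show ?case by simp
next
  case (step y z)
  then have "induced E T y z" by (auto simp: induced_def)
  with step show ?case by (meson rtranclp.rtrancl_into_rtrancl)
qed

lemma rtc_map:
  assumes "\<And>a b. R a b \<Longrightarrow> R'\<^sup>*\<^sup>* (f a) (f b)"
  shows "R\<^sup>*\<^sup>* u v \<Longrightarrow> R'\<^sup>*\<^sup>* (f u) (f v)"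
proof (induction rule: rtranclp_induct)
  case base then show ?case by simp
next
  case (step y z)
  then show ?case using assms[of y z] by (meson rtranclp_trans)
qed

lemma rtc_cross:
  "R\<^sup>*\<^sup>* a d \<Longrightarrow> P a \<Longrightarrow> \<not> P d \<Longrightarrow> \<exists>u w. R u w \<and> P u \<and> \<not> P w"
  by (induction rule: rtranclp_induct) auto

lemma induced_sym:
  assumes "\<forall>u v. E u v \<longrightarrow> E v u"
  shows "(induced E S)\<^sup>*\<^sup>* u v \<Longrightarrow> (induced E S)\<^sup>*\<^sup>* v u"
proof (induction rule: rtranclp_induct)
  case base then show ?case by simp
next
  case (step y z)
  then have "induced E S z y" using assms by (auto simp: induced_def)
  with step show ?case by (meson converse_rtranclp_into_rtranclp)
qed

lemma conn_root:
  assumes "\<forall>u v. E u v \<longrightarrow> E v u" "\<forall>a\<in>S. (induced E S)\<^sup>*\<^sup>* r a"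
  shows "connected_on E S"
  unfolding connected_on_def
proof (intro ballI)
  fix u v assume "u \<in> S" "v \<in> S"
  then have "(induced E S)\<^sup>*\<^sup>* u r" "(induced E S)\<^sup>*\<^sup>* r v"
    using assms induced_sym[OF assms(1)] by blast+
  then show "(induced E S)\<^sup>*\<^sup>* u v" by (meson rtranclp_trans)
qed

definition reach :: "('a \<Rightarrow> 'a \<Rightarrow> bool) \<Rightarrow> 'a set \<Rightarrow> 'a \<Rightarrow> 'a set" where
  "reach E S a = {v \<in> S. (induced E S)\<^sup>*\<^sup>* a v}"

lemma reach_closed:
  "v \<in> reach E S a \<Longrightarrow> w \<in> S \<Longrightarrow> E v w \<Longrightarrow> w \<in> reach E S a"
  unfolding reach_def
proof clarify
  assume "v \<in> S" "(induced E S)\<^sup>*\<^sup>* a v" "w \<in> S" "E v w"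
  then have "induced E S v w" by (auto simp: induced_def)
  then show "(induced E S)\<^sup>*\<^sup>* a w" using \<open>(induced E S)\<^sup>*\<^sup>* a v\<close>
    by (meson rtranclp.rtrancl_into_rtrancl)
qed

lemma reach_sub: "reach E S a \<subseteq> S" by (auto simp: reach_def)

lemma reach_self: "a \<in> S \<Longrightarrow> a \<in> reach E S a" by (auto simp: reach_def)

lemma forced_subset: "B0 \<subseteq> V \<Longrightarrow> forced V E B0 \<subseteq> V"
proof
  fix x assume "x \<in> forced V E B0" "B0 \<subseteq> V"
  then show "x \<in> V" by (induction rule: forced.induct) auto
qed


lemma LB:
  assumes sg: "simple_graph V E" and finB: "finite BB"
    and cl: "\<forall>F\<in>BB. is_clique E F"
    and cov: "\<forall>u v. E u v \<longrightarrow> (\<exists>F\<in>BB. u \<in> F \<and> v \<in> F)"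
    and zf: "zero_forcing_set V E B0"
  shows "card V \<le> card B0 + card BB"
proof -
  have finV: "finite V" using sg by (simp add: simple_graph_def)
  have B0V: "B0 \<subseteq> V" and fV: "forced V E B0 = V" using zf by (auto simp: zero_forcing_set_def)
  define SS where "SS = {S. B0 \<subseteq> S \<and> S \<subseteq> V \<and> card S \<le> card B0 + card {F\<in>BB. F \<subseteq> S}}"
  have "B0 \<in> SS" using B0V by (auto simp: SS_def)
  moreover have "finite SS" using finV by (auto simp: SS_def intro: finite_subset[of _ "Pow V"])
  ultimately obtain S where S: "S \<in> SS" and Smax: "\<forall>T\<in>SS. card T \<le> card S"
    using max_card_ex by blast
  have SV: "S \<subseteq> V" and B0S: "B0 \<subseteq> S" and Sc: "card S \<le> card B0 + card {F\<in>BB. F \<subseteq> S}"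
    using S by (auto simp: SS_def)
  have finS: "finite S" using SV finV finite_subset by blast
  have "forced V E B0 \<subseteq> S"
  proof
    fix x assume "x \<in> forced V E B0"
    then show "x \<in> S"
    proof (induction rule: forced.induct)
      case (init v) then show ?case using B0S by auto
    next
      case (force u v)
      show ?case
      proof (rule ccontr)
        assume vS: "v \<notin> S"
        obtain F where F: "F \<in> BB" "u \<in> F" "v \<in> F" using cov force by blast
        have FS: "F \<subseteq> insert v S"
        proof
          fix f assume "f \<in> F"
          show "f \<in> insert v S"
          proof (cases "f = v \<or> f = u")
            case True then show ?thesis using force by auto
          next
            case False
            then have "E u f" using cl F \<open>f \<in> F\<close> by (auto simp: is_clique_def)
            then show ?thesis using force False by auto
          qed
        qed
        have "insert F {F\<in>BB. F \<subseteq> S} \<subseteq> {F\<in>BB. F \<subseteq> insert v S}" using FS F by auto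
        moreover have "F \<notin> {F\<in>BB. F \<subseteq> S}" using F vS by auto
        ultimately have "card {F\<in>BB. F \<subseteq> S} + 1 \<le> card {F\<in>BB. F \<subseteq> insert v S}"
          using finB by (metis (no_types, lifting) card_insert_disjoint card_mono finite_subset
               mem_Collect_eq subsetI Suc_eq_plus1 finite_Collect_conjI)
        moreover have "card (insert v S) = card S + 1" using vS finS by simp
        ultimately have "insert v S \<in> SS" using Sc B0S SV force by (auto simp: SS_def)
        then have "card (insert v S) \<le> card S" using Smax by blast
        then show False using vS finS by simp
      qed
    qed
  qed
  then have "S = V" using fV SV by auto
  then have "card V \<le> card B0 + card {F\<in>BB. F \<subseteq> V}" using Sc by simp
  also have "card {F\<in>BB. F \<subseteq> V} \<le> card BB" using finB by (intro card_mono) auto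
  finally show ?thesis by simp
qed


lemma conn_empty: "connected_on E {}" by (simp add: connected_on_def)
lemma conn_single: "connected_on E {x}" by (simp add: connected_on_def)

lemma edge_nonsep:
  assumes "E u v" "u \<noteq> v" "\<forall>u v. E u v \<longrightarrow> E v u"
  shows "nonseparable E {u, v}"
proof -
  have "\<forall>a\<in>{u,v}. (induced E {u,v})\<^sup>*\<^sup>* u a"
    using assms by (auto simp: induced_def intro!: r_into_rtranclp)
  then have "connected_on E {u,v}" using conn_root[OF assms(3)] by blast
  moreover have "\<forall>w\<in>{u,v}. connected_on E ({u,v} - {w})"
    using assms(2) by (auto simp: insert_Diff_if conn_single)
  ultimately show ?thesis by (simp add: nonseparable_def)
qed

lemma extend_block:
  assumes "finite V" "S \<subseteq> V" "nonseparable E S"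
  shows "\<exists>B. is_block V E B \<and> S \<subseteq> B"
proof -
  define TT where "TT = {T. S \<subseteq> T \<and> T \<subseteq> V \<and> nonseparable E T}"
  have "S \<in> TT" using assms by (auto simp: TT_def)
  moreover have "finite TT" using assms(1) by (auto simp: TT_def intro: finite_subset[of _ "Pow V"])
  ultimately obtain T where T: "T \<in> TT" and Tmax: "\<forall>T'\<in>TT. card T' \<le> card T"
    using max_card_ex by blast
  have "is_block V E T"
    unfolding is_block_def
  proof (intro conjI allI impI)
    show "T \<subseteq> V" "nonseparable E T" using T by (auto simp: TT_def)
    fix T' assume "T \<subset> T' \<and> T' \<subseteq> V"
    then have "T' \<in> TT" if "nonseparable E T'" using T that by (auto simp: TT_def)
    moreover have "card T < card T'" using \<open>T \<subset> T' \<and> T' \<subseteq> V\<close> assms(1)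
      by (meson finite_subset psubset_card_mono)
    ultimately show "\<not> nonseparable E T'" using Tmax by fastforce
  qed
  then show ?thesis using T by (auto simp: TT_def)
qed

lemma induced_induced: "S \<subseteq> V1 \<Longrightarrow> induced (induced E V1) S = induced E S"
  by (auto simp: induced_def fun_eq_iff)

lemma nonsep_transfer:
  assumes "S \<subseteq> V1"
  shows "nonseparable (induced E V1) S = nonseparable E S"
proof -
  have "\<And>T. T \<subseteq> V1 \<Longrightarrow> connected_on (induced E V1) T = connected_on E T"
    by (simp add: connected_on_def induced_induced)
  moreover have "\<And>v. S - {v} \<subseteq> V1" using assms by auto
  ultimately show ?thesis using assms by (simp add: nonseparable_def)
qed


definition sep :: "'a set \<Rightarrow> ('a \<Rightarrow> 'a \<Rightarrow> bool) \<Rightarrow> 'a \<Rightarrow> 'a set \<Rightarrow> bool" where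
  "sep V E c C \<longleftrightarrow> c \<in> V \<and> C \<subseteq> V - {c} \<and> C \<noteq> {} \<and> V - {c} - C \<noteq> {}
     \<and> (\<forall>u\<in>C. \<forall>w. E u w \<longrightarrow> w \<in> C \<or> w = c)"

lemma sep_exists:
  assumes sg: "simple_graph V E" and "\<not> nonseparable E V" "V \<noteq> {}" "connected_on E V"
  shows "\<exists>c C. sep V E c C"
proof -
  obtain c where c: "c \<in> V" "\<not> connected_on E (V - {c})"
    using assms by (auto simp: nonseparable_def)
  then obtain a b where ab: "a \<in> V - {c}" "b \<in> V - {c}" "\<not> (induced E (V - {c}))\<^sup>*\<^sup>* a b"
    by (auto simp: connected_on_def)
  define C where "C = reach E (V - {c}) a"
  have "sep V E c C"
    unfolding sep_def
  proof (intro conjI ballI allI impI)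
    show "c \<in> V" by fact
    show "C \<subseteq> V - {c}" by (simp add: C_def reach_sub)
    show "C \<noteq> {}" using reach_self[OF ab(1)] C_def by auto
    show "V - {c} - C \<noteq> {}" using ab by (auto simp: C_def reach_def)
    fix u w assume "u \<in> C" "E u w"
    then have "w \<in> V" using sg by (auto simp: simple_graph_def)
    then show "w \<in> C \<or> w = c" using reach_closed[of u E "V - {c}" a w] \<open>u \<in> C\<close> \<open>E u w\<close>
      by (auto simp: C_def)
  qed
  then show ?thesis by blast
qed

lemma min_sep:
  assumes "\<exists>c C. sep V E c C"
  shows "\<exists>c C. sep V E c C \<and> (\<forall>c' C'. sep V E c' C' \<longrightarrow> card C \<le> card C')"
proof -
  obtain p where "sep V E (fst p) (snd p)" using assms by auto
  then obtain q where "sep V E (fst q) (snd q)"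
    "\<forall>y. sep V E (fst y) (snd y) \<longrightarrow> card (snd q) \<le> card (snd y)"
    using ex_has_least_nat[where P = "\<lambda>p. sep V E (fst p) (snd p)" and m = "\<lambda>p. card (snd p)"]
    by blast
  then show ?thesis by (metis fst_conv snd_conv)
qed

lemma leaf_block:
  assumes sg: "simple_graph V E" and con: "connected_on E V"
    and sp: "sep V E c C" and mn: "\<forall>c' C'. sep V E c' C' \<longrightarrow> card C \<le> card C'"
  shows "is_block V E (insert c C)"
proof -
  have finV: "finite V" and sym: "\<forall>u v. E u v \<longrightarrow> E v u"
    and inV: "\<forall>u v. E u v \<longrightarrow> u \<in> V \<and> v \<in> V" using sg by (auto simp: simple_graph_def)
  have cV: "c \<in> V" and CV: "C \<subseteq> V - {c}" and Cne: "C \<noteq> {}" and rest: "V - {c} - C \<noteq> {}"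
    and clo: "\<forall>u\<in>C. \<forall>w. E u w \<longrightarrow> w \<in> C \<or> w = c" using sp by (auto simp: sep_def)
  have finC: "finite C" using CV finV finite_subset by blast
  have reachC: "reach E C a = C" if aC: "a \<in> C" for a
  proof (rule ccontr)
    assume ne: "reach E C a \<noteq> C"
    define C' where "C' = reach E C a"
    have sub: "C' \<subset> C" using ne reach_sub[of E C a] by (auto simp: C'_def)
    have "sep V E c C'"
      unfolding sep_def
    proof (intro conjI ballI allI impI)
      show "c \<in> V" by fact
      show "C' \<subseteq> V - {c}" using sub CV by auto
      show "C' \<noteq> {}" using reach_self[OF aC] C'_def by auto
      show "V - {c} - C' \<noteq> {}" using sub CV by auto
      fix u w assume "u \<in> C'" "E u w"
      then have "w \<in> C \<or> w = c" using clo sub by auto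
      then show "w \<in> C' \<or> w = c" using reach_closed[of u E C a w] \<open>u \<in> C'\<close> \<open>E u w\<close>
        by (auto simp: C'_def)
    qed
    then have "card C \<le> card C'" using mn by blast
    moreover have "card C' < card C" using sub finC psubset_card_mono by blast
    ultimately show False by simp
  qed
  have conC: "connected_on E C"
    unfolding connected_on_def
  proof (intro ballI)
    fix u v assume "u \<in> C" "v \<in> C"
    then have "v \<in> reach E C u" using reachC by auto
    then show "(induced E C)\<^sup>*\<^sup>* u v" by (simp add: reach_def)
  qed
  obtain a0 where a0: "a0 \<in> C" "E c a0"
  proof -
    obtain a d where "a \<in> C" "d \<in> V - {c} - C" using Cne rest by blast
    then have "(induced E V)\<^sup>*\<^sup>* a d" using con CV by (auto simp: connected_on_def)
    then obtain u w where "induced E V u w" "u \<in> C" "w \<notin> C"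
      using rtc_cross[of "induced E V" a d "\<lambda>x. x \<in> C"] \<open>a \<in> C\<close> \<open>d \<in> V - {c} - C\<close> by blast
    then have "E u w" "w = c" using clo by (auto simp: induced_def)
    then show ?thesis using that sym \<open>u \<in> C\<close> by blast
  qed
  define L where "L = insert c C"
  have cC: "c \<notin> C" using CV by auto
  have conL: "connected_on E L"
  proof (rule conn_root[OF sym, of L c])
    show "\<forall>x\<in>L. (induced E L)\<^sup>*\<^sup>* c x"
    proof
      fix x assume "x \<in> L"
      show "(induced E L)\<^sup>*\<^sup>* c x"
      proof (cases "x = c")
        case True then show ?thesis by simp
      next
        case False
        then have "x \<in> C" using \<open>x \<in> L\<close> by (auto simp: L_def)
        then have "(induced E C)\<^sup>*\<^sup>* a0 x" using conC a0 by (auto simp: connected_on_def)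
        then have "(induced E L)\<^sup>*\<^sup>* a0 x" by (rule induced_mono_rtc) (auto simp: L_def)
        moreover have "induced E L c a0" using a0 by (auto simp: induced_def L_def)
        ultimately show ?thesis by (meson converse_rtranclp_into_rtranclp)
      qed
    qed
  qed
  have conLw: "connected_on E (L - {w})" if wL: "w \<in> L" for w
  proof (cases "w = c")
    case True then show ?thesis using conC cC by (simp add: L_def)
  next
    case False
    then have wC: "w \<in> C" using wL by (auto simp: L_def)
    define S' where "S' = L - {w}"
    have cS': "c \<in> S'" using False by (auto simp: S'_def L_def)
    have "\<forall>x\<in>S'. (induced E S')\<^sup>*\<^sup>* c x"
    proof (rule ccontr)
      assume "\<not> (\<forall>x\<in>S'. (induced E S')\<^sup>*\<^sup>* c x)"
      then obtain x where x: "x \<in> S'" "\<not> (induced E S')\<^sup>*\<^sup>* c x" by blast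
      define C'' where "C'' = reach E S' x"
      have cnot: "c \<notin> C''"
      proof
        assume "c \<in> C''"
        then have "(induced E S')\<^sup>*\<^sup>* x c" by (simp add: C''_def reach_def)
        then show False using x(2) induced_sym[OF sym] by blast
      qed
      have subC: "C'' \<subseteq> C - {w}" using reach_sub[of E S' x] cnot by (auto simp: C''_def S'_def L_def)
      have "sep V E w C''"
        unfolding sep_def
      proof (intro conjI ballI allI impI)
        show "w \<in> V" using wC CV by auto
        show "C'' \<subseteq> V - {w}" using subC CV by auto
        show "C'' \<noteq> {}" using reach_self[OF x(1)] C''_def by auto
        show "V - {w} - C'' \<noteq> {}" using cnot cV False by auto
        fix u w' assume "u \<in> C''" "E u w'"
        then have "w' \<in> C \<or> w' = c" using clo subC by auto
        then have "w' = w \<or> w' \<in> S'" by (auto simp: S'_def L_def)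
        then show "w' \<in> C'' \<or> w' = w" using reach_closed[of u E S' x w'] \<open>u \<in> C''\<close> \<open>E u w'\<close>
          by (auto simp: C''_def)
      qed
      then have "card C \<le> card C''" using mn by blast
      moreover have "C'' \<subset> C" using subC wC by blast
      then have "card C'' < card C" using finC psubset_card_mono by blast
      ultimately show False by simp
    qed
    then show ?thesis using conn_root[OF sym] by (auto simp: S'_def)
  qed
  have nsL: "nonseparable E L" using conL conLw by (auto simp: nonseparable_def L_def)
  have LV: "L \<subseteq> V" using cV CV by (auto simp: L_def)
  have "\<not> nonseparable E T" if T: "L \<subset> T" "T \<subseteq> V" for T
  proof
    assume nsT: "nonseparable E T"
    obtain t where t: "t \<in> T" "t \<notin> L" using T by blast
    have "connected_on E (T - {c})" using nsT T by (auto simp: nonseparable_def L_def)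
    moreover have "a0 \<in> T - {c}" "t \<in> T - {c}" using a0 t T cC by (auto simp: L_def)
    ultimately have "(induced E (T - {c}))\<^sup>*\<^sup>* a0 t" by (auto simp: connected_on_def)
    then obtain u w where "induced E (T - {c}) u w" "u \<in> C" "w \<notin> C"
      using rtc_cross[of "induced E (T - {c})" a0 t "\<lambda>x. x \<in> C"] a0 t by (auto simp: L_def)
    then show False using clo by (auto simp: induced_def)
  qed
  then show ?thesis using nsL LV by (auto simp: is_block_def L_def)
qed


lemma UB_aux:
  "card V = n \<Longrightarrow> simple_graph V E \<Longrightarrow> clique_tree V E \<Longrightarrow> \<forall>B\<in>blocks V E. card B \<ge> 3
   \<Longrightarrow> \<exists>B0. zero_forcing_set V E B0 \<and> card B0 + card (blocks V E) \<le> card V"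
proof (induction n arbitrary: V E rule: less_induct)
  case (less n)
  have sg: "simple_graph V E" and ct: "clique_tree V E" and b3: "\<forall>B\<in>blocks V E. card B \<ge> 3"
    using less.prems by auto
  have finV: "finite V" and sym: "\<forall>u v. E u v \<longrightarrow> E v u" and irr: "\<forall>v. \<not> E v v"
    and inV: "\<forall>u v. E u v \<longrightarrow> u \<in> V \<and> v \<in> V" using sg by (auto simp: simple_graph_def)
  have Vne: "V \<noteq> {}" and conV: "connected_on E V" and cliq: "\<forall>B\<in>blocks V E. is_clique E B"
    using ct by (auto simp: clique_tree_def)
  show ?case
  proof (cases "nonseparable E V")
    case True
    have "is_block V E V" using True by (auto simp: is_block_def)
    moreover have "B = V" if "is_block V E B" for B
      using that True by (auto simp: is_block_def)
    ultimately have blk: "blocks V E = {V}" by (auto simp: blocks_def)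
    then have c3: "card V \<ge> 3" and clV: "is_clique E V" using b3 cliq by auto
    obtain y where y: "y \<in> V" using Vne by blast
    have "card (V - {y}) \<ge> 2" using c3 y finV by simp
    then obtain z where z: "z \<in> V" "z \<noteq> y"
      by (metis Diff_empty Diff_iff card.empty insert_iff not_numeral_le_zero subsetI subset_antisym
          equals0I)
    define B0 where "B0 = V - {y}"
    have "V \<subseteq> forced V E B0"
    proof
      fix x assume "x \<in> V"
      show "x \<in> forced V E B0"
      proof (cases "x = y")
        case False then show ?thesis using \<open>x \<in> V\<close> by (auto simp: B0_def intro: forced.init)
      next
        case True
        have "z \<in> forced V E B0" using z by (auto simp: B0_def intro: forced.init)
        moreover have "E z y" using clV z y by (auto simp: is_clique_def)
        moreover have "\<forall>w. E z w \<and> w \<noteq> y \<longrightarrow> w \<in> forced V E B0"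
          using inV by (auto simp: B0_def intro: forced.init)
        ultimately show ?thesis using True y by (auto intro: forced.force)
      qed
    qed
    then have "zero_forcing_set V E B0" using forced_subset[of B0 V E]
      by (auto simp: zero_forcing_set_def B0_def)
    moreover have "card B0 + card (blocks V E) \<le> card V" using blk y finV c3 by (simp add: B0_def)
    ultimately show ?thesis by blast
  next
    case False
    obtain c C where sp: "sep V E c C" and mn: "\<forall>c' C'. sep V E c' C' \<longrightarrow> card C \<le> card C'"
      using min_sep[OF sep_exists[OF sg False Vne conV]] by blast
    define L where "L = insert c C"
    have Lb: "is_block V E L" using leaf_block[OF sg conV sp mn] by (simp add: L_def)
    have cV: "c \<in> V" and CV: "C \<subseteq> V - {c}" and Cne: "C \<noteq> {}" and rest: "V - {c} - C \<noteq> {}"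
      and clo: "\<forall>u\<in>C. \<forall>w. E u w \<longrightarrow> w \<in> C \<or> w = c" using sp by (auto simp: sep_def)
    define V1 where "V1 = V - C"
    define E1 where "E1 = induced E V1"
    have cV1: "c \<in> V1" using cV CV by (auto simp: V1_def)
    have sg1: "simple_graph V1 E1"
      using finV sym irr by (auto simp: simple_graph_def E1_def induced_def V1_def)
    have ind1: "induced E1 V1 = induced E V1" by (simp add: E1_def induced_induced)
    define f where "f = (\<lambda>w. if w \<in> C then c else w)"
    have conV1: "connected_on E1 V1"
      unfolding connected_on_def
    proof (intro ballI)
      fix u v assume uv: "u \<in> V1" "v \<in> V1"
      have "(induced E V)\<^sup>*\<^sup>* u v" using conV uv by (auto simp: connected_on_def V1_def)
      moreover have "(induced E1 V1)\<^sup>*\<^sup>* (f a) (f b)" if ab: "induced E V a b" for a b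
      proof -
        have "E a b" "a \<in> V" "b \<in> V" using ab by (auto simp: induced_def)
        consider "a \<notin> C" "b \<notin> C" | "a \<in> C" "b \<in> C" | "a \<in> C" "b \<notin> C" | "a \<notin> C" "b \<in> C" by blast
        then show ?thesis
        proof cases
          case 1
          then have "induced E1 V1 (f a) (f b)"
            using \<open>E a b\<close> \<open>a \<in> V\<close> \<open>b \<in> V\<close> by (auto simp: ind1 induced_def f_def V1_def E1_def)
          then show ?thesis by blast
        next
          case 2 then show ?thesis by (simp add: f_def)
        next
          case 3 then have "b = c" using clo \<open>E a b\<close> by blast
          then show ?thesis using 3 by (simp add: f_def)
        next
          case 4 then have "a = c" using clo \<open>E a b\<close> sym by blast
          then show ?thesis using 4 by (simp add: f_def)
        qed
      qed
      ultimately have "(induced E1 V1)\<^sup>*\<^sup>* (f u) (f v)" using rtc_map[of "induced E V" "induced E1 V1" f] by blast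
      then show "(induced E1 V1)\<^sup>*\<^sup>* u v" using uv by (simp add: f_def V1_def)
    qed
    have nsplit: "S \<subseteq> V1 \<or> S \<subseteq> L" if S: "S \<subseteq> V" "nonseparable E S" for S
    proof (rule ccontr)
      assume "\<not> (S \<subseteq> V1 \<or> S \<subseteq> L)"
      then obtain a t where a: "a \<in> S" "a \<in> C" and t: "t \<in> S" "t \<notin> L"
        using S by (auto simp: V1_def)
      have "connected_on E (S - {c})"
      proof (cases "c \<in> S")
        case True then show ?thesis using S by (auto simp: nonseparable_def)
      next
        case False then show ?thesis using S by (auto simp: nonseparable_def)
      qed
      moreover have "a \<in> S - {c}" "t \<in> S - {c}" using a t CV by (auto simp: L_def)
      ultimately have "(induced E (S - {c}))\<^sup>*\<^sup>* a t" by (auto simp: connected_on_def)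
      then obtain u w where "induced E (S - {c}) u w" "u \<in> C" "w \<notin> C"
        using rtc_cross[of "induced E (S - {c})" a t "\<lambda>x. x \<in> C"] a t by (auto simp: L_def)
      then show False using clo by (auto simp: induced_def)
    qed
    have nsL: "nonseparable E L" and LV: "L \<subseteq> V" using Lb by (auto simp: is_block_def)
    have b1: "B \<in> blocks V1 E1" if "B \<in> blocks V E" "B \<noteq> L" for B
    proof -
      have B: "B \<subseteq> V" "nonseparable E B" "\<forall>T. B \<subset> T \<and> T \<subseteq> V \<longrightarrow> \<not> nonseparable E T"
        using that by (auto simp: blocks_def is_block_def)
      have "B \<subseteq> V1"
      proof -
        have "\<not> B \<subseteq> L" using B nsL LV \<open>B \<noteq> L\<close> by blast
        then show ?thesis using nsplit B by blast
      qed
      moreover have "nonseparable E1 B" using B \<open>B \<subseteq> V1\<close> nonsep_transfer by (metis E1_def)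
      moreover have "\<not> nonseparable E1 T" if "B \<subset> T" "T \<subseteq> V1" for T
        using that B nonsep_transfer[of T V1 E] by (auto simp: E1_def V1_def)
      ultimately show ?thesis by (auto simp: blocks_def is_block_def)
    qed
    obtain d where d: "d \<in> V1" "E c d"
    proof -
      obtain d0 where "d0 \<in> V1" "d0 \<noteq> c" using rest by (auto simp: V1_def)
      then have "(induced E1 V1)\<^sup>*\<^sup>* c d0" using conV1 cV1 by (auto simp: connected_on_def)
      then obtain u w where "induced E1 V1 u w" "u = c" "w \<noteq> c"
        using rtc_cross[of "induced E1 V1" c d0 "\<lambda>x. x = c"] \<open>d0 \<noteq> c\<close> by auto
      then show ?thesis using that by (auto simp: ind1 induced_def E1_def)
    qed
    have b2: "B \<in> blocks V E" if "B \<in> blocks V1 E1" for B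
    proof -
      have B: "B \<subseteq> V1" "nonseparable E1 B" "\<forall>T. B \<subset> T \<and> T \<subseteq> V1 \<longrightarrow> \<not> nonseparable E1 T"
        using that by (auto simp: blocks_def is_block_def)
      have nsB: "nonseparable E B" using B nonsep_transfer by (metis E1_def)
      have "\<not> nonseparable E T" if T: "B \<subset> T" "T \<subseteq> V" for T
      proof
        assume nsT: "nonseparable E T"
        then consider "T \<subseteq> V1" | "T \<subseteq> L" using nsplit T by blast
        then show False
        proof cases
          case 1 then have "nonseparable E1 T" using nsT nonsep_transfer[of T V1 E] by (simp add: E1_def)
          then show False using B(3) T(1) 1 by blast
        next
          case 2
          then have "B \<subseteq> {c}" using T(1) B(1) by (auto simp: L_def V1_def)
          moreover have "B \<noteq> {}" using B(2) by (simp add: nonseparable_def)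
          ultimately have Bc: "B = {c}" by auto
          have "c \<noteq> d" using d irr by auto
          then have "nonseparable E {c, d}" using edge_nonsep[OF d(2) _ sym] by blast
          then have "nonseparable E1 {c, d}" using nonsep_transfer[of "{c,d}" V1 E] d cV1
            by (simp add: E1_def)
          moreover have "B \<subset> {c, d}" "{c, d} \<subseteq> V1" using Bc \<open>c \<noteq> d\<close> d cV1 by auto
          ultimately show False using B by blast
        qed
      qed
      then show ?thesis using nsB B by (auto simp: blocks_def is_block_def V1_def)
    qed
    have Lnot: "L \<notin> blocks V1 E1"
    proof
      assume "L \<in> blocks V1 E1"
      then have "L \<subseteq> V1" by (auto simp: blocks_def is_block_def)
      then show False using Cne by (auto simp: L_def V1_def)
    qed
    have blkeq: "blocks V E = insert L (blocks V1 E1)"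
      using b1 b2 Lb by (auto simp: blocks_def)
    have finB1: "finite (blocks V1 E1)"
      using finV by (auto simp: blocks_def is_block_def V1_def intro: finite_subset[of _ "Pow V"])
    have cardB: "card (blocks V E) = card (blocks V1 E1) + 1" using blkeq Lnot finB1 by simp
    have ct1: "clique_tree V1 E1"
    proof -
      have "is_clique E1 B" if "B \<in> blocks V1 E1" for B
      proof -
        have "is_clique E B" using cliq b2 that by blast
        moreover have "B \<subseteq> V1" using that by (auto simp: blocks_def is_block_def)
        ultimately show ?thesis by (auto simp: is_clique_def E1_def induced_def)
      qed
      then show ?thesis using cV1 conV1 by (auto simp: clique_tree_def)
    qed
    have b31: "\<forall>B\<in>blocks V1 E1. card B \<ge> 3" using b3 b2 by blast
    have finC: "finite C" using CV finV finite_subset by blast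
    have CV': "C \<subseteq> V" using CV by auto
    have cardV: "card V = card V1 + card C"
      using card_Diff_subset[OF finC CV'] card_mono[OF finV CV'] by (simp add: V1_def)
    have "card V1 < card V" using cardV Cne finC by auto
    then obtain B0' where zf1: "zero_forcing_set V1 E1 B0'"
      and cb1: "card B0' + card (blocks V1 E1) \<le> card V1"
      using less.IH[OF _ refl sg1 ct1 b31] less.prems(1) by blast
    have L3: "card L \<ge> 3" and clL: "is_clique E L" using b3 cliq blkeq by auto
    have "c \<notin> C" using CV by auto
    then have cL: "card L = card C + 1" using finC by (simp add: L_def)
    obtain y where y: "y \<in> C" using Cne by blast
    have "card (C - {y}) \<ge> 1" using L3 cL y finC by simp
    then obtain z where z: "z \<in> C" "z \<noteq> y"
      by (metis Diff_eq_empty_iff card.empty insert_Diff insert_iff not_one_le_zero subsetI)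
    define B0 where "B0 = B0' \<union> (C - {y})"
    have B0'V1: "B0' \<subseteq> V1" and f1: "forced V1 E1 B0' = V1" using zf1 by (auto simp: zero_forcing_set_def)
    have cardB0: "card B0 \<le> card B0' + (card C - 1)"
      using card_Un_le[of B0' "C - {y}"] y finC by (simp add: B0_def)
    have B0V: "B0 \<subseteq> V" using B0'V1 CV by (auto simp: B0_def V1_def)
    have cy: "y \<in> forced V E B0" if cf: "c \<in> forced V E B0"
    proof -
      have "z \<in> forced V E B0" using z by (auto simp: B0_def intro: forced.init)
      moreover have "E z y" using clL z y by (auto simp: is_clique_def L_def)
      moreover have "\<forall>w. E z w \<and> w \<noteq> y \<longrightarrow> w \<in> forced V E B0"
      proof (intro allI impI)
        fix w assume "E z w \<and> w \<noteq> y"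
        then have "w \<in> C - {y} \<or> w = c" using clo z by blast
        then show "w \<in> forced V E B0" using cf by (auto simp: B0_def intro: forced.init)
      qed
      ultimately show ?thesis using y CV by (auto intro: forced.force)
    qed
    have main: "x \<in> forced V E B0" if "x \<in> forced V1 E1 B0'" for x
      using that
    proof (induction rule: forced.induct)
      case (init v) then show ?case by (auto simp: B0_def intro: forced.init)
    next
      case (force u v)
      have uV1: "u \<in> V1" and Euv: "E u v" using force.hyps by (auto simp: E1_def induced_def)
      have "w \<in> forced V E B0" if w: "E u w" "w \<noteq> v" for w
      proof (cases "w \<in> C")
        case False
        then have "E1 u w" using w uV1 inV by (auto simp: E1_def induced_def V1_def)
        then show ?thesis using force.IH w by blast
      next
        case True
        then have "u = c" using clo w sym uV1 by (auto simp: V1_def)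
        then have "y \<in> forced V E B0" using cy force.IH by blast
        then show ?thesis using True by (cases "w = y") (auto simp: B0_def intro: forced.init)
      qed
      then show ?case using force.IH Euv inV by (auto intro: forced.force)
    qed
    have "V1 \<subseteq> forced V E B0" using main f1 by blast
    then have "y \<in> forced V E B0" using cy cV1 by blast
    then have "C \<subseteq> forced V E B0" by (auto simp: B0_def intro: forced.init)
    then have "V \<subseteq> forced V E B0" using \<open>V1 \<subseteq> forced V E B0\<close> by (auto simp: V1_def)
    then have "zero_forcing_set V E B0" using forced_subset[OF B0V, of E] B0V
      by (auto simp: zero_forcing_set_def)
    moreover have "card B0 + card (blocks V E) \<le> card V"
      using cardB0 cardB cb1 cardV cL L3 by linarith
    ultimately show ?thesis by blast
  qed
qed


lemma Z_eq:
  assumes "finite V" "zero_forcing_set V E B0" "card B0 \<le> k"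
    and "\<And>B1. zero_forcing_set V E B1 \<Longrightarrow> k \<le> card B1"
  shows "Z V E = k"
proof -
  have fin: "finite {B0. zero_forcing_set V E B0}"
    using assms(1) by (auto simp: zero_forcing_set_def intro: finite_subset[of _ "Pow V"])
  have "Z V E \<in> card ` {B0. zero_forcing_set V E B0}"
    unfolding Z_def using fin assms(2) by (intro Min_in) auto
  then have "k \<le> Z V E" using assms(4) by auto
  moreover have "Z V E \<le> card B0" unfolding Z_def using fin assms(2) by (intro Min_le) auto
  ultimately show ?thesis using assms(3) by simp
qed

lemma Z_clique:
  assumes sg: "simple_graph V E" and BV: "B \<subseteq> V" and cl: "is_clique E B" and c2: "card B \<ge> 2"
  shows "Z B (induced E B) = card B - 1"
proof -
  have finV: "finite V" and sym: "\<forall>u v. E u v \<longrightarrow> E v u" and irr: "\<forall>v. \<not> E v v"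
    using sg by (auto simp: simple_graph_def)
  have finB: "finite B" using BV finV finite_subset by blast
  have sgB: "simple_graph B (induced E B)"
    using finB sym irr by (auto simp: simple_graph_def induced_def)
  obtain y where y: "y \<in> B" using c2 by fastforce
  have "card (B - {y}) \<ge> 1" using c2 y finB by simp
  then obtain z where z: "z \<in> B" "z \<noteq> y"
    by (metis Diff_eq_empty_iff card.empty insert_Diff insert_iff not_one_le_zero subsetI)
  define B0 where "B0 = B - {y}"
  have "B \<subseteq> forced B (induced E B) B0"
  proof
    fix x assume "x \<in> B"
    show "x \<in> forced B (induced E B) B0"
    proof (cases "x = y")
      case False then show ?thesis using \<open>x \<in> B\<close> by (auto simp: B0_def intro: forced.init)
    next
      case True
      have "z \<in> forced B (induced E B) B0" using z by (auto simp: B0_def intro: forced.init)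
      moreover have "induced E B z y" using cl z y by (auto simp: is_clique_def induced_def)
      moreover have "\<forall>w. induced E B z w \<and> w \<noteq> y \<longrightarrow> w \<in> forced B (induced E B) B0"
        by (auto simp: B0_def induced_def intro: forced.init)
      ultimately show ?thesis using True y by (auto intro: forced.force)
    qed
  qed
  then have zf: "zero_forcing_set B (induced E B) B0" using forced_subset[of B0 B "induced E B"]
    by (auto simp: zero_forcing_set_def B0_def)
  show ?thesis
  proof (rule Z_eq[OF finB zf])
    show "card B0 \<le> card B - 1" using y finB by (simp add: B0_def)
    fix B1 assume "zero_forcing_set B (induced E B) B1"
    then have "card B \<le> card B1 + card {B}"
      using LB[OF sgB, of "{B}"] cl by (auto simp: is_clique_def induced_def)
    then show "card B - 1 \<le> card B1" by simp
  qed
qed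

theorem theorem2p6:
  fixes V :: "'a set" and E :: "'a \<Rightarrow> 'a \<Rightarrow> bool"
  assumes "simple_graph V E"
    and "clique_tree V E"
    and "\<forall>B\<in>blocks V E. card B \<ge> 3"
  shows "int (Z V E) = (\<Sum>B\<in>blocks V E. int (Z B (induced E B)))
                      - (\<Sum>v\<in>V. int (block_index V E v) - 1)"
proof -
  have sg: "simple_graph V E" by fact
  have finV: "finite V" and sym: "\<forall>u v. E u v \<longrightarrow> E v u" and irr: "\<forall>v. \<not> E v v"
    and inV: "\<forall>u v. E u v \<longrightarrow> u \<in> V \<and> v \<in> V" using sg by (auto simp: simple_graph_def)
  have cliq: "\<forall>B\<in>blocks V E. is_clique E B" using assms(2) by (auto simp: clique_tree_def)
  have finBB: "finite (blocks V E)"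
    using finV by (auto simp: blocks_def is_block_def intro: finite_subset[of _ "Pow V"])
  have BsubV: "\<And>B. B \<in> blocks V E \<Longrightarrow> B \<subseteq> V" by (auto simp: blocks_def is_block_def)
  have cov: "\<forall>u v. E u v \<longrightarrow> (\<exists>F\<in>blocks V E. u \<in> F \<and> v \<in> F)"
  proof (intro allI impI)
    fix u v assume "E u v"
    then have "nonseparable E {u, v}" "{u, v} \<subseteq> V" using edge_nonsep[of E u v] sym irr inV by auto
    then obtain B where "is_block V E B" "{u,v} \<subseteq> B" using extend_block[OF finV] by blast
    then show "\<exists>F\<in>blocks V E. u \<in> F \<and> v \<in> F" by (auto simp: blocks_def)
  qed
  obtain B0 where zf: "zero_forcing_set V E B0" and cb: "card B0 + card (blocks V E) \<le> card V"
    using UB_aux[OF refl assms] by blast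
  have ZV: "Z V E = card V - card (blocks V E)"
  proof (rule Z_eq[OF finV zf])
    show "card B0 \<le> card V - card (blocks V E)" using cb by simp
    fix B1 assume "zero_forcing_set V E B1"
    then show "card V - card (blocks V E) \<le> card B1" using LB[OF sg finBB cliq cov] by fastforce
  qed
  have ZB: "int (Z B (induced E B)) = int (card B) - 1" if "B \<in> blocks V E" for B
  proof -
    have "Z B (induced E B) = card B - 1"
      using Z_clique[OF sg BsubV[OF that]] cliq assms(3) that by auto
    moreover have "card B \<ge> 1" using assms(3) that by fastforce
    ultimately show ?thesis by (simp add: of_nat_diff)
  qed
  have dc: "(\<Sum>v\<in>V. block_index V E v) = (\<Sum>B\<in>blocks V E. card B)"
  proof -
    have "(\<Sum>v\<in>V. block_index V E v) = (\<Sum>v\<in>V. \<Sum>B\<in>{B\<in>blocks V E. v \<in> B}. (1::nat))"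
      by (simp add: block_index_def)
    also have "\<dots> = (\<Sum>B\<in>blocks V E. \<Sum>v\<in>{v\<in>V. v \<in> B}. (1::nat))"
      by (rule sum.swap_restrict[OF finV finBB])
    also have "\<dots> = (\<Sum>B\<in>blocks V E. card B)"
    proof (rule sum.cong[OF refl])
      fix B assume "B \<in> blocks V E"
      then have "{v\<in>V. v \<in> B} = B" using BsubV by auto
      then show "(\<Sum>v\<in>{v\<in>V. v \<in> B}. (1::nat)) = card B" by simp
    qed
    finally show ?thesis .
  qed
  have "(\<Sum>B\<in>blocks V E. int (Z B (induced E B))) = (\<Sum>B\<in>blocks V E. int (card B)) - int (card (blocks V E))"
    using ZB by (simp add: sum_subtractf)
  moreover have "(\<Sum>v\<in>V. int (block_index V E v) - 1) = (\<Sum>v\<in>V. int (block_index V E v)) - int (card V)"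
    by (simp add: sum_subtractf)
  moreover have "(\<Sum>v\<in>V. int (block_index V E v)) = (\<Sum>B\<in>blocks V E. int (card B))"
    using dc by (metis of_nat_sum)
  moreover have "int (Z V E) = int (card V) - int (card (blocks V E))"
    using ZV cb by (simp add: of_nat_diff)
  ultimately show ?thesis by simp
qed

end
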